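(* Let $\mathcal{C}$ be a bicomplete category with splitting and disjoint coproducts. Then the identity functor of $\mathcal{C}$ is a left Quillen equivalence from the generalized core model structure to the generalized cocore model structure.
   Context: Bicomplete means having all finite limits and finite colimits. In both structures the weak equivalences are the morphisms $f:A\to B$ for which some morphism $B\to A$ exists. Generalized core model structure: cofibrations are the morphisms with the left lifting property against all retractions, fibrations are those with the right lifting property against all cofibrations that are weak equivalences (its acyclic fibrations are the retractions). Generalized cocore model structure: fibrations are the morphisms with the right lifting property against all sections, cofibrations are those with the left lifting property against all fibrations that are weak equivalences (its acyclic cofibrations are the sections). Splitting coproducts: every $f:X\to A\sqcup B$ is isomorphic to $f_L\sqcup f_R$ with $f_L:X_L\to A$, $f_R:X_R\to B$, $X\cong X_L\sqcup X_R$. Disjoint coproducts: coproduct injections are monic, the pullback of $i_1:A\to A\sqcup B$ and $i_2:B\to A\sqcup B$ is the initial object, and the pullback of $i_1$ along itself (resp. $i_2$ along itself) is $A$ (resp. $B$) with identity maps. *)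

theory Defs
  imports Main
begin

record ('o, 'a) cat =
  Obj  :: "'o set"
  Arr  :: "'a set"
  Dom  :: "'a \<Rightarrow> 'o"
  Cod  :: "'a \<Rightarrow> 'o"
  Id   :: "'o \<Rightarrow> 'a"
  Comp :: "'a \<Rightarrow> 'a \<Rightarrow> 'a"   (* Comp C g f = g o f, for Cod f = Dom g *)

definition hom :: "('o, 'a) cat \<Rightarrow> 'o \<Rightarrow> 'o \<Rightarrow> 'a set" where
  "hom C X Y = {f \<in> Arr C. Dom C f = X \<and> Cod C f = Y}"

definition category :: "('o, 'a) cat \<Rightarrow> bool" where
  "category C \<longleftrightarrow>
     (\<forall>f \<in> Arr C. Dom C f \<in> Obj C \<and> Cod C f \<in> Obj C) \<and>
     (\<forall>X \<in> Obj C. Id C X \<in> hom C X X) \<and>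
     (\<forall>f \<in> Arr C. \<forall>g \<in> Arr C. Cod C f = Dom C g \<longrightarrow> Comp C g f \<in> hom C (Dom C f) (Cod C g)) \<and>
     (\<forall>f \<in> Arr C. Comp C (Id C (Cod C f)) f = f \<and> Comp C f (Id C (Dom C f)) = f) \<and>
     (\<forall>f \<in> Arr C. \<forall>g \<in> Arr C. \<forall>h \<in> Arr C. Cod C f = Dom C g \<longrightarrow> Cod C g = Dom C h \<longrightarrow>
        Comp C h (Comp C g f) = Comp C (Comp C h g) f)"

definition initial :: "('o, 'a) cat \<Rightarrow> 'o \<Rightarrow> bool" where
  "initial C I \<longleftrightarrow> I \<in> Obj C \<and> (\<forall>X \<in> Obj C. \<exists>!f. f \<in> hom C I X)"

definition terminal :: "('o, 'a) cat \<Rightarrow> 'o \<Rightarrow> bool" where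
  "terminal C T \<longleftrightarrow> T \<in> Obj C \<and> (\<forall>X \<in> Obj C. \<exists>!f. f \<in> hom C X T)"

definition is_coproduct :: "('o, 'a) cat \<Rightarrow> 'o \<Rightarrow> 'o \<Rightarrow> 'o \<Rightarrow> 'a \<Rightarrow> 'a \<Rightarrow> bool" where
  "is_coproduct C A B P i1 i2 \<longleftrightarrow>
     i1 \<in> hom C A P \<and> i2 \<in> hom C B P \<and>
     (\<forall>Z \<in> Obj C. \<forall>f \<in> hom C A Z. \<forall>g \<in> hom C B Z.
        \<exists>!h. h \<in> hom C P Z \<and> Comp C h i1 = f \<and> Comp C h i2 = g)"

definition is_product :: "('o, 'a) cat \<Rightarrow> 'o \<Rightarrow> 'o \<Rightarrow> 'o \<Rightarrow> 'a \<Rightarrow> 'a \<Rightarrow> bool" where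
  "is_product C A B P p1 p2 \<longleftrightarrow>
     p1 \<in> hom C P A \<and> p2 \<in> hom C P B \<and>
     (\<forall>Z \<in> Obj C. \<forall>f \<in> hom C Z A. \<forall>g \<in> hom C Z B.
        \<exists>!h. h \<in> hom C Z P \<and> Comp C p1 h = f \<and> Comp C p2 h = g)"

definition is_equalizer :: "('o, 'a) cat \<Rightarrow> 'a \<Rightarrow> 'a \<Rightarrow> 'o \<Rightarrow> 'a \<Rightarrow> bool" where
  "is_equalizer C f g E e \<longleftrightarrow>
     e \<in> hom C E (Dom C f) \<and> Comp C f e = Comp C g e \<and>
     (\<forall>Z \<in> Obj C. \<forall>k \<in> hom C Z (Dom C f). Comp C f k = Comp C g k \<longrightarrow>
        (\<exists>!h. h \<in> hom C Z E \<and> Comp C e h = k))"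

definition is_coequalizer :: "('o, 'a) cat \<Rightarrow> 'a \<Rightarrow> 'a \<Rightarrow> 'o \<Rightarrow> 'a \<Rightarrow> bool" where
  "is_coequalizer C f g Q q \<longleftrightarrow>
     q \<in> hom C (Cod C f) Q \<and> Comp C q f = Comp C q g \<and>
     (\<forall>Z \<in> Obj C. \<forall>k \<in> hom C (Cod C f) Z. Comp C k f = Comp C k g \<longrightarrow>
        (\<exists>!h. h \<in> hom C Q Z \<and> Comp C h q = k))"

definition is_pullback :: "('o, 'a) cat \<Rightarrow> 'a \<Rightarrow> 'a \<Rightarrow> 'o \<Rightarrow> 'a \<Rightarrow> 'a \<Rightarrow> bool" where
  "is_pullback C f g P p q \<longleftrightarrow>
     p \<in> hom C P (Dom C f) \<and> q \<in> hom C P (Dom C g) \<and> Comp C f p = Comp C g q \<and>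
     (\<forall>Z \<in> Obj C. \<forall>u \<in> hom C Z (Dom C f). \<forall>v \<in> hom C Z (Dom C g).
        Comp C f u = Comp C g v \<longrightarrow> (\<exists>!h. h \<in> hom C Z P \<and> Comp C p h = u \<and> Comp C q h = v))"

text \<open>Finitely complete and cocomplete (terminal/initial object, binary
  (co)products and (co)equalizers of parallel pairs).\<close>
definition bicomplete :: "('o, 'a) cat \<Rightarrow> bool" where
  "bicomplete C \<longleftrightarrow>
     (\<exists>T. terminal C T) \<and> (\<exists>I. initial C I) \<and>
     (\<forall>A \<in> Obj C. \<forall>B \<in> Obj C. \<exists>P p1 p2. is_product C A B P p1 p2) \<and>
     (\<forall>A \<in> Obj C. \<forall>B \<in> Obj C. \<exists>P i1 i2. is_coproduct C A B P i1 i2) \<and>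
     (\<forall>f \<in> Arr C. \<forall>g \<in> Arr C. Dom C f = Dom C g \<longrightarrow> Cod C f = Cod C g \<longrightarrow>
        (\<exists>E e. is_equalizer C f g E e) \<and> (\<exists>Q q. is_coequalizer C f g Q q))"

text \<open>Every f : X \<rightarrow> A \<squnion> B is isomorphic (over A \<squnion> B) to f_L \<squnion> f_R with
  X \<cong> X_L \<squnion> X_R: equivalently X is a coproduct of X_L, X_R with injections
  j1, j2 such that f o j1 = i1 o f_L and f o j2 = i2 o f_R.\<close>
definition splitting_coproducts :: "('o, 'a) cat \<Rightarrow> bool" where
  "splitting_coproducts C \<longleftrightarrow>
     (\<forall>A B P i1 i2. is_coproduct C A B P i1 i2 \<longrightarrow>
        (\<forall>f \<in> Arr C. Cod C f = P \<longrightarrow>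
           (\<exists>XL XR j1 j2 fL fR.
              is_coproduct C XL XR (Dom C f) j1 j2 \<and>
              fL \<in> hom C XL A \<and> fR \<in> hom C XR B \<and>
              Comp C f j1 = Comp C i1 fL \<and> Comp C f j2 = Comp C i2 fR)))"

definition monic :: "('o, 'a) cat \<Rightarrow> 'a \<Rightarrow> bool" where
  "monic C m \<longleftrightarrow> m \<in> Arr C \<and>
     (\<forall>u \<in> Arr C. \<forall>v \<in> Arr C. Cod C u = Dom C m \<longrightarrow> Cod C v = Dom C m \<longrightarrow>
        Comp C m u = Comp C m v \<longrightarrow> u = v)"

definition disjoint_coproducts :: "('o, 'a) cat \<Rightarrow> bool" where
  "disjoint_coproducts C \<longleftrightarrow>
     (\<forall>A B P i1 i2. is_coproduct C A B P i1 i2 \<longrightarrow>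
        monic C i1 \<and> monic C i2 \<and>
        (\<forall>Q p q. is_pullback C i1 i2 Q p q \<longrightarrow> initial C Q) \<and>
        (\<exists>Q p q. is_pullback C i1 i2 Q p q) \<and>
        is_pullback C i1 i1 A (Id C A) (Id C A) \<and>
        is_pullback C i2 i2 B (Id C B) (Id C B))"

definition lifts :: "('o, 'a) cat \<Rightarrow> 'a \<Rightarrow> 'a \<Rightarrow> bool" where
  "lifts C i p \<longleftrightarrow>
     (\<forall>u \<in> hom C (Dom C i) (Dom C p). \<forall>v \<in> hom C (Cod C i) (Cod C p).
        Comp C p u = Comp C v i \<longrightarrow>
        (\<exists>h \<in> hom C (Cod C i) (Dom C p). Comp C h i = u \<and> Comp C p h = v))"

definition LLP :: "('o, 'a) cat \<Rightarrow> 'a set \<Rightarrow> 'a set" where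
  "LLP C S = {i \<in> Arr C. \<forall>p \<in> S. lifts C i p}"

definition RLP :: "('o, 'a) cat \<Rightarrow> 'a set \<Rightarrow> 'a set" where
  "RLP C S = {p \<in> Arr C. \<forall>i \<in> S. lifts C i p}"

definition retractions :: "('o, 'a) cat \<Rightarrow> 'a set" where
  "retractions C = {f \<in> Arr C. \<exists>s \<in> hom C (Cod C f) (Dom C f). Comp C f s = Id C (Cod C f)}"

definition sections :: "('o, 'a) cat \<Rightarrow> 'a set" where
  "sections C = {f \<in> Arr C. \<exists>r \<in> hom C (Cod C f) (Dom C f). Comp C r f = Id C (Dom C f)}"

definition weq :: "('o, 'a) cat \<Rightarrow> 'a set" where
  "weq C = {f \<in> Arr C. hom C (Cod C f) (Dom C f) \<noteq> {}}"

text \<open>A model structure is a triple (weak equivalences, cofibrations, fibrations).\<close>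
type_synonym 'a mstruct = "'a set \<times> 'a set \<times> 'a set"

definition core_ms :: "('o, 'a) cat \<Rightarrow> 'a mstruct" where
  "core_ms C = (let cof = LLP C (retractions C) in (weq C, cof, RLP C (cof \<inter> weq C)))"

definition cocore_ms :: "('o, 'a) cat \<Rightarrow> 'a mstruct" where
  "cocore_ms C = (let fib = RLP C (sections C) in (weq C, LLP C (fib \<inter> weq C), fib))"

definition is_retract_of :: "('o, 'a) cat \<Rightarrow> 'a \<Rightarrow> 'a \<Rightarrow> bool" where
  "is_retract_of C f g \<longleftrightarrow> f \<in> Arr C \<and> g \<in> Arr C \<and>
     (\<exists>a r b s. a \<in> hom C (Dom C f) (Dom C g) \<and> r \<in> hom C (Dom C g) (Dom C f) \<and>
        b \<in> hom C (Cod C f) (Cod C g) \<and> s \<in> hom C (Cod C g) (Cod C f) \<and>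
        Comp C r a = Id C (Dom C f) \<and> Comp C s b = Id C (Cod C f) \<and>
        Comp C g a = Comp C b f \<and> Comp C f r = Comp C s g)"

definition model_structure :: "('o, 'a) cat \<Rightarrow> 'a mstruct \<Rightarrow> bool" where
  "model_structure C M \<longleftrightarrow> (case M of (W, Cof, Fib) \<Rightarrow>
     W \<subseteq> Arr C \<and> Cof \<subseteq> Arr C \<and> Fib \<subseteq> Arr C \<and>
     (\<forall>f \<in> Arr C. \<forall>g \<in> Arr C. Cod C f = Dom C g \<longrightarrow>
        ((f \<in> W \<and> g \<in> W \<longrightarrow> Comp C g f \<in> W) \<and>
         (f \<in> W \<and> Comp C g f \<in> W \<longrightarrow> g \<in> W) \<and>
         (g \<in> W \<and> Comp C g f \<in> W \<longrightarrow> f \<in> W))) \<and>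
     (\<forall>f g. is_retract_of C f g \<longrightarrow>
        (g \<in> W \<longrightarrow> f \<in> W) \<and> (g \<in> Cof \<longrightarrow> f \<in> Cof) \<and> (g \<in> Fib \<longrightarrow> f \<in> Fib)) \<and>
     (\<forall>i \<in> Cof. \<forall>p \<in> Fib \<inter> W. lifts C i p) \<and>
     (\<forall>i \<in> Cof \<inter> W. \<forall>p \<in> Fib. lifts C i p) \<and>
     (\<forall>f \<in> Arr C. \<exists>i p. i \<in> Cof \<inter> W \<and> p \<in> Fib \<and> Cod C i = Dom C p \<and> Comp C p i = f) \<and>
     (\<forall>f \<in> Arr C. \<exists>i p. i \<in> Cof \<and> p \<in> Fib \<inter> W \<and> Cod C i = Dom C p \<and> Comp C p i = f))"

definition ms_we :: "'a mstruct \<Rightarrow> 'a set" where "ms_we M = fst M"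
definition ms_cof :: "'a mstruct \<Rightarrow> 'a set" where "ms_cof M = fst (snd M)"
definition ms_fib :: "'a mstruct \<Rightarrow> 'a set" where "ms_fib M = snd (snd M)"

definition cofibrant :: "('o, 'a) cat \<Rightarrow> 'a mstruct \<Rightarrow> 'o \<Rightarrow> bool" where
  "cofibrant C M X \<longleftrightarrow> (\<forall>I f. initial C I \<longrightarrow> f \<in> hom C I X \<longrightarrow> f \<in> ms_cof M)"

definition fibrant :: "('o, 'a) cat \<Rightarrow> 'a mstruct \<Rightarrow> 'o \<Rightarrow> bool" where
  "fibrant C M X \<longleftrightarrow> (\<forall>T f. terminal C T \<longrightarrow> f \<in> hom C X T \<longrightarrow> f \<in> ms_fib M)"

text \<open>The identity functor (with the identity adjunction) is a left Quillen
  equivalence from M1 to M2: both are model structures, the identity preserves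
  cofibrations and acyclic cofibrations, and for M1-cofibrant A and M2-fibrant B
  a map f : A \<rightarrow> B is an M2-weak equivalence iff its adjunct (f itself) is an
  M1-weak equivalence.\<close>
definition id_left_quillen_equivalence :: "('o, 'a) cat \<Rightarrow> 'a mstruct \<Rightarrow> 'a mstruct \<Rightarrow> bool" where
  "id_left_quillen_equivalence C M1 M2 \<longleftrightarrow>
     model_structure C M1 \<and> model_structure C M2 \<and>
     ms_cof M1 \<subseteq> ms_cof M2 \<and>
     ms_cof M1 \<inter> ms_we M1 \<subseteq> ms_cof M2 \<inter> ms_we M2 \<and>
     (\<forall>A B f. cofibrant C M1 A \<longrightarrow> fibrant C M2 B \<longrightarrow> f \<in> hom C A B \<longrightarrow>
        (f \<in> ms_we M2 \<longleftrightarrow> f \<in> ms_we M1))"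

end

theory Submission
  imports Defs
begin

locale cc =
  fixes C :: "('o,'a) cat"
  assumes cat: "category C" and bic: "bicomplete C"
begin

abbreviation cmp (infixr "\<cdot>" 55) where "g \<cdot> f \<equiv> Comp C g f"

lemma arr_hom: "f \<in> Arr C \<Longrightarrow> f \<in> hom C (Dom C f) (Cod C f)"
  by (simp add: hom_def)

lemma hom_arr: "f \<in> hom C X Y \<Longrightarrow> f \<in> Arr C \<and> Dom C f = X \<and> Cod C f = Y"
  by (simp add: hom_def)

lemma hom_obj: "f \<in> hom C X Y \<Longrightarrow> X \<in> Obj C \<and> Y \<in> Obj C"
  using cat unfolding category_def hom_def by auto

lemma comp_in: "f \<in> hom C X Y \<Longrightarrow> g \<in> hom C Y Z \<Longrightarrow> g \<cdot> f \<in> hom C X Z"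
  using cat unfolding category_def hom_def by auto

lemma id_in: "X \<in> Obj C \<Longrightarrow> Id C X \<in> hom C X X"
  using cat unfolding category_def by auto

lemma id_l: "f \<in> hom C X Y \<Longrightarrow> Id C Y \<cdot> f = f"
  using cat unfolding category_def hom_def by auto

lemma id_r: "f \<in> hom C X Y \<Longrightarrow> f \<cdot> Id C X = f"
  using cat unfolding category_def hom_def by auto

lemma assoc: "f \<in> hom C X Y \<Longrightarrow> g \<in> hom C Y Z \<Longrightarrow> h \<in> hom C Z W \<Longrightarrow> h \<cdot> (g \<cdot> f) = (h \<cdot> g) \<cdot> f"
  using cat unfolding category_def hom_def by auto

lemma coprod_inj: "is_coproduct C A B P i1 i2 \<Longrightarrow> i1 \<in> hom C A P \<and> i2 \<in> hom C B P"
  unfolding is_coproduct_def by auto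

lemma prod_proj: "is_product C A B P p1 p2 \<Longrightarrow> p1 \<in> hom C P A \<and> p2 \<in> hom C P B"
  unfolding is_product_def by auto

lemma copair:
  assumes cp: "is_coproduct C A B P i1 i2" and f: "f \<in> hom C A Z" and g: "g \<in> hom C B Z"
  obtains h where "h \<in> hom C P Z" "h \<cdot> i1 = f" "h \<cdot> i2 = g"
proof -
  have "Z \<in> Obj C" using hom_obj[OF f] by simp
  then have "\<exists>!h. h \<in> hom C P Z \<and> h \<cdot> i1 = f \<and> h \<cdot> i2 = g"
    using cp f g unfolding is_coproduct_def by blast
  then show ?thesis using that by blast
qed

lemma copair_uniq:
  assumes cp: "is_coproduct C A B P i1 i2" and h: "h \<in> hom C P Z" and h': "h' \<in> hom C P Z"
    and e1: "h \<cdot> i1 = h' \<cdot> i1" and e2: "h \<cdot> i2 = h' \<cdot> i2"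
  shows "h = h'"
proof -
  have i: "i1 \<in> hom C A P" "i2 \<in> hom C B P" using coprod_inj[OF cp] by auto
  have Z: "Z \<in> Obj C" using hom_obj[OF h] by simp
  have "\<exists>!k. k \<in> hom C P Z \<and> k \<cdot> i1 = h \<cdot> i1 \<and> k \<cdot> i2 = h \<cdot> i2"
    using cp Z comp_in[OF i(1) h] comp_in[OF i(2) h] unfolding is_coproduct_def by blast
  then show ?thesis using h h' e1 e2 by metis
qed

lemma pair:
  assumes pr: "is_product C A B P p1 p2" and f: "f \<in> hom C Z A" and g: "g \<in> hom C Z B"
  obtains h where "h \<in> hom C Z P" "p1 \<cdot> h = f" "p2 \<cdot> h = g"
proof -
  have "Z \<in> Obj C" using hom_obj[OF f] by simp
  then have "\<exists>!h. h \<in> hom C Z P \<and> p1 \<cdot> h = f \<and> p2 \<cdot> h = g"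
    using pr f g unfolding is_product_def by blast
  then show ?thesis using that by blast
qed

lemma pair_uniq:
  assumes pr: "is_product C A B P p1 p2" and h: "h \<in> hom C Z P" and h': "h' \<in> hom C Z P"
    and e1: "p1 \<cdot> h = p1 \<cdot> h'" and e2: "p2 \<cdot> h = p2 \<cdot> h'"
  shows "h = h'"
proof -
  have p: "p1 \<in> hom C P A" "p2 \<in> hom C P B" using prod_proj[OF pr] by auto
  have Z: "Z \<in> Obj C" using hom_obj[OF h] by simp
  have "\<exists>!k. k \<in> hom C Z P \<and> p1 \<cdot> k = p1 \<cdot> h \<and> p2 \<cdot> k = p2 \<cdot> h"
    using pr Z comp_in[OF h p(1)] comp_in[OF h p(2)] unfolding is_product_def by blast
  then show ?thesis using h h' e1 e2 by metis
qed

lemma ex_coprod: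
  assumes "A \<in> Obj C" "B \<in> Obj C"
  obtains P i1 i2 where "is_coproduct C A B P i1 i2"
  using bic assms unfolding bicomplete_def by blast

lemma ex_prod:
  assumes "A \<in> Obj C" "B \<in> Obj C"
  obtains P p1 p2 where "is_product C A B P p1 p2"
  using bic assms unfolding bicomplete_def by blast

lemma lifts_use:
  assumes l: "lifts C i p" and i: "i \<in> hom C A B" and p: "p \<in> hom C X Y"
    and u: "u \<in> hom C A X" and v: "v \<in> hom C B Y" and sq: "p \<cdot> u = v \<cdot> i"
  obtains h where "h \<in> hom C B X" "h \<cdot> i = u" "p \<cdot> h = v"
  using l i p u v sq unfolding lifts_def hom_def by auto

lemma liftsI:
  assumes i: "i \<in> hom C A B" and p: "p \<in> hom C X Y"
    and H: "\<And>u v. u \<in> hom C A X \<Longrightarrow> v \<in> hom C B Y \<Longrightarrow> p \<cdot> u = v \<cdot> i \<Longrightarrow> \<exists>h\<in>hom C B X. h \<cdot> i = u \<and> p \<cdot> h = v"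
  shows "lifts C i p"
  using i p H unfolding lifts_def hom_def by auto


lemma LLP_anti: "S \<subseteq> T \<Longrightarrow> LLP C T \<subseteq> LLP C S" unfolding LLP_def by auto
lemma RLP_anti: "S \<subseteq> T \<Longrightarrow> RLP C T \<subseteq> RLP C S" unfolding RLP_def by auto
lemma ret_arr: "retractions C \<subseteq> Arr C" unfolding retractions_def by auto
lemma sec_arr: "sections C \<subseteq> Arr C" unfolding sections_def by auto
lemma RLP_LLP: "S \<subseteq> Arr C \<Longrightarrow> S \<subseteq> RLP C (LLP C S)" unfolding LLP_def RLP_def by auto
lemma LLP_RLP: "S \<subseteq> Arr C \<Longrightarrow> S \<subseteq> LLP C (RLP C S)" unfolding LLP_def RLP_def by auto
lemma ret_weq: "retractions C \<subseteq> weq C" unfolding retractions_def weq_def by auto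
lemma sec_weq: "sections C \<subseteq> weq C" unfolding sections_def weq_def by auto

lemma weqI: "f \<in> hom C X Y \<Longrightarrow> g \<in> hom C Y X \<Longrightarrow> f \<in> weq C"
  unfolding weq_def hom_def by auto

lemma weqE: assumes "f \<in> weq C" obtains g where "g \<in> hom C (Cod C f) (Dom C f)"
  using assms unfolding weq_def by auto

lemma inj1_cof:
  assumes cp: "is_coproduct C A B P i1 i2"
  shows "i1 \<in> LLP C (retractions C)"
proof -
  have i: "i1 \<in> hom C A P" "i2 \<in> hom C B P" using coprod_inj[OF cp] by auto
  have "lifts C i1 p" if pr: "p \<in> retractions C" for p
  proof -
    obtain s where p: "p \<in> hom C (Dom C p) (Cod C p)" and s: "s \<in> hom C (Cod C p) (Dom C p)"
      and ps: "p \<cdot> s = Id C (Cod C p)"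
      using pr unfolding retractions_def by (auto simp: hom_def)
    show ?thesis
    proof (rule liftsI[OF i(1) p])
      fix u v assume u: "u \<in> hom C A (Dom C p)" and v: "v \<in> hom C P (Cod C p)" and sq: "p \<cdot> u = v \<cdot> i1"
      have vi2: "v \<cdot> i2 \<in> hom C B (Cod C p)" using comp_in[OF i(2) v] .
      have m: "s \<cdot> (v \<cdot> i2) \<in> hom C B (Dom C p)" using comp_in[OF vi2 s] .
      obtain h where h: "h \<in> hom C P (Dom C p)" "h \<cdot> i1 = u" "h \<cdot> i2 = s \<cdot> (v \<cdot> i2)"
        using copair[OF cp u m] by blast
      have ph: "p \<cdot> h \<in> hom C P (Cod C p)" using comp_in[OF h(1) p] .
      have "p \<cdot> h = v"
      proof (rule copair_uniq[OF cp ph v])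
        show "(p \<cdot> h) \<cdot> i1 = v \<cdot> i1" using assoc[OF i(1) h(1) p] h(2) sq by simp
        have "(p \<cdot> h) \<cdot> i2 = p \<cdot> (s \<cdot> (v \<cdot> i2))" using assoc[OF i(2) h(1) p] h(3) by simp
        also have "... = (p \<cdot> s) \<cdot> (v \<cdot> i2)" using assoc[OF vi2 s p] .
        also have "... = v \<cdot> i2" using ps id_l[OF vi2] by simp
        finally show "(p \<cdot> h) \<cdot> i2 = v \<cdot> i2" .
      qed
      then show "\<exists>h\<in>hom C P (Dom C p). h \<cdot> i1 = u \<and> p \<cdot> h = v" using h by blast
    qed
  qed
  then show ?thesis unfolding LLP_def using i(1) by (auto simp: hom_def)
qed

lemma core_acfib_ret:
  assumes pf: "p \<in> RLP C (LLP C (retractions C) \<inter> weq C)" and pw: "p \<in> weq C"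
  shows "p \<in> retractions C"
proof -
  define X where "X = Dom C p"
  define Y where "Y = Cod C p"
  have p: "p \<in> hom C X Y" using pf unfolding RLP_def X_def Y_def hom_def by auto
  obtain s where s: "s \<in> hom C Y X" using weqE[OF pw] X_def Y_def by auto
  have XY: "X \<in> Obj C" "Y \<in> Obj C" using hom_obj[OF p] by auto
  obtain P i1 i2 where cp: "is_coproduct C X Y P i1 i2" using ex_coprod[OF XY] .
  have i: "i1 \<in> hom C X P" "i2 \<in> hom C Y P" using coprod_inj[OF cp] by auto
  obtain q where q: "q \<in> hom C P Y" "q \<cdot> i1 = p" "q \<cdot> i2 = Id C Y"
    using copair[OF cp p id_in[OF XY(2)]] by blast
  obtain r where r: "r \<in> hom C P X" "r \<cdot> i1 = Id C X" "r \<cdot> i2 = s"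
    using copair[OF cp id_in[OF XY(1)] s] by blast
  have "i1 \<in> LLP C (retractions C) \<inter> weq C" using inj1_cof[OF cp] weqI[OF i(1) r(1)] by auto
  then have l: "lifts C i1 p" using pf unfolding RLP_def by auto
  have sq: "p \<cdot> Id C X = q \<cdot> i1" using id_r[OF p] q(2) by simp
  obtain h where h: "h \<in> hom C P X" "h \<cdot> i1 = Id C X" "p \<cdot> h = q"
    using lifts_use[OF l i(1) p id_in[OF XY(1)] q(1) sq] by blast
  have "p \<cdot> (h \<cdot> i2) = Id C Y" using assoc[OF i(2) h(1) p] h(3) q(3) by simp
  then show ?thesis using p comp_in[OF i(2) h(1)] unfolding retractions_def hom_def by auto
qed

lemma core_fib:
  assumes f: "f \<in> hom C A B" and pr: "is_product C A B Q \<pi>1 \<pi>2"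
    and cp: "is_coproduct C A Q P j1 j2" and p: "p \<in> hom C P B" and pj1: "p \<cdot> j1 = f"
    and pj2: "p \<cdot> j2 = \<pi>2"
  shows "p \<in> RLP C (LLP C (retractions C) \<inter> weq C)"
proof -
  have \<pi>: "\<pi>1 \<in> hom C Q A" "\<pi>2 \<in> hom C Q B" using prod_proj[OF pr] by auto
  have j: "j1 \<in> hom C A P" "j2 \<in> hom C Q P" using coprod_inj[OF cp] by auto
  have AB: "A \<in> Obj C" "B \<in> Obj C" using hom_obj[OF f] by auto
  obtain r where r: "r \<in> hom C P A" using copair[OF cp id_in[OF AB(1)] \<pi>(1)] by blast
  have "lifts C i p" if iL: "i \<in> LLP C (retractions C)" and iW: "i \<in> weq C" for i
  proof -
    define A' where "A' = Dom C i"
    define B' where "B' = Cod C i"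
    have i: "i \<in> hom C A' B'" using iL unfolding LLP_def A'_def B'_def hom_def by auto
    obtain g where g: "g \<in> hom C B' A'" using weqE[OF iW] A'_def B'_def by auto
    have AB': "A' \<in> Obj C" "B' \<in> Obj C" using hom_obj[OF i] by auto
    obtain R k1 k2 where cR: "is_coproduct C A' B' R k1 k2" using ex_coprod[OF AB'] .
    have k: "k1 \<in> hom C A' R" "k2 \<in> hom C B' R" using coprod_inj[OF cR] by auto
    obtain \<rho> where \<rho>: "\<rho> \<in> hom C R B'" "\<rho> \<cdot> k1 = i" "\<rho> \<cdot> k2 = Id C B'"
      using copair[OF cR i id_in[OF AB'(2)]] by blast
    have "\<rho> \<in> retractions C" using \<rho> k(2) unfolding retractions_def hom_def by auto
    then have l\<rho>: "lifts C i \<rho>" using iL unfolding LLP_def by auto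
    have sq0: "\<rho> \<cdot> k1 = Id C B' \<cdot> i" using \<rho>(2) id_l[OF i] by simp
    obtain h0 where h0: "h0 \<in> hom C B' R" "h0 \<cdot> i = k1" "\<rho> \<cdot> h0 = Id C B'"
      using lifts_use[OF l\<rho> i \<rho>(1) k(1) id_in[OF AB'(2)] sq0] by blast
    show ?thesis
    proof (rule liftsI[OF i p])
      fix u v assume u: "u \<in> hom C A' P" and v: "v \<in> hom C B' B" and sq: "p \<cdot> u = v \<cdot> i"
      have rug: "r \<cdot> (u \<cdot> g) \<in> hom C B' A" using comp_in[OF comp_in[OF g u] r] .
      obtain w where w: "w \<in> hom C B' Q" "\<pi>1 \<cdot> w = r \<cdot> (u \<cdot> g)" "\<pi>2 \<cdot> w = v"
        using pair[OF pr rug v] by blast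
      have j2w: "j2 \<cdot> w \<in> hom C B' P" using comp_in[OF w(1) j(2)] .
      obtain m where m: "m \<in> hom C R P" "m \<cdot> k1 = u" "m \<cdot> k2 = j2 \<cdot> w"
        using copair[OF cR u j2w] by blast
      have hin: "m \<cdot> h0 \<in> hom C B' P" using comp_in[OF h0(1) m(1)] .
      have hi: "(m \<cdot> h0) \<cdot> i = u"
        using assoc[OF i h0(1) m(1)] h0(2) m(2) by simp
      have pm: "p \<cdot> m = v \<cdot> \<rho>"
      proof (rule copair_uniq[OF cR comp_in[OF m(1) p] comp_in[OF \<rho>(1) v]])
        show "(p \<cdot> m) \<cdot> k1 = (v \<cdot> \<rho>) \<cdot> k1"
          using assoc[OF k(1) m(1) p] assoc[OF k(1) \<rho>(1) v] m(2) \<rho>(2) sq by simp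
        have "(p \<cdot> m) \<cdot> k2 = p \<cdot> (j2 \<cdot> w)" using assoc[OF k(2) m(1) p] m(3) by simp
        also have "... = v" using assoc[OF w(1) j(2) p] pj2 w(3) by simp
        also have "... = (v \<cdot> \<rho>) \<cdot> k2" using assoc[OF k(2) \<rho>(1) v] \<rho>(3) id_r[OF v] by simp
        finally show "(p \<cdot> m) \<cdot> k2 = (v \<cdot> \<rho>) \<cdot> k2" .
      qed
      have "p \<cdot> (m \<cdot> h0) = (v \<cdot> \<rho>) \<cdot> h0" using assoc[OF h0(1) m(1) p] pm by simp
      also have "... = v" using assoc[OF h0(1) \<rho>(1) v] h0(3) id_r[OF v] by simp
      finally show "\<exists>h\<in>hom C B' P. h \<cdot> i = u \<and> p \<cdot> h = v" using hin hi by blast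
    qed
  qed
  then show ?thesis unfolding RLP_def using p by (auto simp: hom_def)
qed


lemma proj2_fib:
  assumes pr: "is_product C X Y Q \<pi>1 \<pi>2"
  shows "\<pi>2 \<in> RLP C (sections C)"
proof -
  have \<pi>: "\<pi>1 \<in> hom C Q X" "\<pi>2 \<in> hom C Q Y" using prod_proj[OF pr] by auto
  have "lifts C i \<pi>2" if isec: "i \<in> sections C" for i
  proof -
    obtain r where i: "i \<in> hom C (Dom C i) (Cod C i)" and r: "r \<in> hom C (Cod C i) (Dom C i)"
      and ri: "r \<cdot> i = Id C (Dom C i)"
      using isec unfolding sections_def by (auto simp: hom_def)
    show ?thesis
    proof (rule liftsI[OF i \<pi>(2)])
      fix u v assume u: "u \<in> hom C (Dom C i) Q" and v: "v \<in> hom C (Cod C i) Y" and sq: "\<pi>2 \<cdot> u = v \<cdot> i"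
      have ur: "u \<cdot> r \<in> hom C (Cod C i) Q" using comp_in[OF r u] .
      obtain h where h: "h \<in> hom C (Cod C i) Q" "\<pi>1 \<cdot> h = \<pi>1 \<cdot> (u \<cdot> r)" "\<pi>2 \<cdot> h = v"
        using pair[OF pr comp_in[OF ur \<pi>(1)] v] by blast
      have "h \<cdot> i = u"
      proof (rule pair_uniq[OF pr comp_in[OF i h(1)] u])
        have "\<pi>1 \<cdot> (h \<cdot> i) = (\<pi>1 \<cdot> (u \<cdot> r)) \<cdot> i" using assoc[OF i h(1) \<pi>(1)] h(2) by simp
        also have "... = \<pi>1 \<cdot> ((u \<cdot> r) \<cdot> i)" using assoc[OF i ur \<pi>(1)] by simp
        also have "... = \<pi>1 \<cdot> u" using assoc[OF i r u] ri id_r[OF u] by simp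
        finally show "\<pi>1 \<cdot> (h \<cdot> i) = \<pi>1 \<cdot> u" .
        show "\<pi>2 \<cdot> (h \<cdot> i) = \<pi>2 \<cdot> u" using assoc[OF i h(1) \<pi>(2)] h(3) sq by simp
      qed
      then show "\<exists>h\<in>hom C (Cod C i) Q. h \<cdot> i = u \<and> \<pi>2 \<cdot> h = v" using h by blast
    qed
  qed
  then show ?thesis unfolding RLP_def using \<pi>(2) by (auto simp: hom_def)
qed

lemma cocore_acof_sec:
  assumes ic: "i \<in> LLP C (RLP C (sections C) \<inter> weq C)" and iw: "i \<in> weq C"
  shows "i \<in> sections C"
proof -
  define A where "A = Dom C i"
  define B where "B = Cod C i"
  have i: "i \<in> hom C A B" using ic unfolding LLP_def A_def B_def hom_def by auto
  obtain r where r: "r \<in> hom C B A" using weqE[OF iw] A_def B_def by auto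
  have AB: "A \<in> Obj C" "B \<in> Obj C" using hom_obj[OF i] by auto
  obtain Q \<pi>1 \<pi>2 where pr: "is_product C A B Q \<pi>1 \<pi>2" using ex_prod[OF AB] .
  have \<pi>: "\<pi>1 \<in> hom C Q A" "\<pi>2 \<in> hom C Q B" using prod_proj[OF pr] by auto
  obtain u where u: "u \<in> hom C A Q" "\<pi>1 \<cdot> u = Id C A" "\<pi>2 \<cdot> u = i"
    using pair[OF pr id_in[OF AB(1)] i] by blast
  obtain t where t: "t \<in> hom C B Q" using pair[OF pr r id_in[OF AB(2)]] by blast
  have "\<pi>2 \<in> RLP C (sections C) \<inter> weq C" using proj2_fib[OF pr] weqI[OF \<pi>(2) t] by auto
  then have l: "lifts C i \<pi>2" using ic unfolding LLP_def by auto
  have sq: "\<pi>2 \<cdot> u = Id C B \<cdot> i" using u(3) id_l[OF i] by simp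
  obtain h where h: "h \<in> hom C B Q" "h \<cdot> i = u" "\<pi>2 \<cdot> h = Id C B"
    using lifts_use[OF l i \<pi>(2) u(1) id_in[OF AB(2)] sq] by blast
  have "(\<pi>1 \<cdot> h) \<cdot> i = Id C A" using assoc[OF i h(1) \<pi>(1)] h(2) u(2) by simp
  then show ?thesis using i comp_in[OF h(1) \<pi>(1)] unfolding sections_def hom_def by auto
qed

lemma cocore_cof:
  assumes f: "f \<in> hom C A B" and cp: "is_coproduct C A B S c1 c2"
    and pr: "is_product C S B P q1 q2" and i: "i \<in> hom C A P" and qi1: "q1 \<cdot> i = c1"
    and qi2: "q2 \<cdot> i = f"
  shows "i \<in> LLP C (RLP C (sections C) \<inter> weq C)"
proof -
  have q: "q1 \<in> hom C P S" "q2 \<in> hom C P B" using prod_proj[OF pr] by auto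
  have c: "c1 \<in> hom C A S" "c2 \<in> hom C B S" using coprod_inj[OF cp] by auto
  have AB: "A \<in> Obj C" "B \<in> Obj C" using hom_obj[OF f] by auto
  obtain e where e: "e \<in> hom C B P" using pair[OF pr c(2) id_in[OF AB(2)]] by blast
  have "lifts C i p" if pF: "p \<in> RLP C (sections C)" and pW: "p \<in> weq C" for p
  proof -
    define X where "X = Dom C p"
    define Y where "Y = Cod C p"
    have p: "p \<in> hom C X Y" using pF unfolding RLP_def X_def Y_def hom_def by auto
    obtain s where s: "s \<in> hom C Y X" using weqE[OF pW] X_def Y_def by auto
    have XY: "X \<in> Obj C" "Y \<in> Obj C" using hom_obj[OF p] by auto
    obtain T t1 t2 where pT: "is_product C X Y T t1 t2" using ex_prod[OF XY] .
    have t: "t1 \<in> hom C T X" "t2 \<in> hom C T Y" using prod_proj[OF pT] by auto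
    obtain j where j: "j \<in> hom C X T" "t1 \<cdot> j = Id C X" "t2 \<cdot> j = p"
      using pair[OF pT id_in[OF XY(1)] p] by blast
    have "j \<in> sections C" using j t(1) unfolding sections_def hom_def by auto
    then have lj: "lifts C j p" using pF unfolding RLP_def by auto
    have sq0: "p \<cdot> Id C X = t2 \<cdot> j" using id_r[OF p] j(3) by simp
    obtain h0 where h0: "h0 \<in> hom C T X" "h0 \<cdot> j = Id C X" "p \<cdot> h0 = t2"
      using lifts_use[OF lj j(1) p id_in[OF XY(1)] t(2) sq0] by blast
    show ?thesis
    proof (rule liftsI[OF i p])
      fix u v assume u: "u \<in> hom C A X" and v: "v \<in> hom C P Y" and sq: "p \<cdot> u = v \<cdot> i"
      have m: "s \<cdot> (v \<cdot> e) \<in> hom C B X" using comp_in[OF comp_in[OF e v] s] .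
      obtain n where n: "n \<in> hom C S X" "n \<cdot> c1 = u" "n \<cdot> c2 = s \<cdot> (v \<cdot> e)"
        using copair[OF cp u m] by blast
      have k: "n \<cdot> q1 \<in> hom C P X" using comp_in[OF q(1) n(1)] .
      obtain w where w: "w \<in> hom C P T" "t1 \<cdot> w = n \<cdot> q1" "t2 \<cdot> w = v"
        using pair[OF pT k v] by blast
      have hin: "h0 \<cdot> w \<in> hom C P X" using comp_in[OF w(1) h0(1)] .
      have wi: "w \<cdot> i = j \<cdot> u"
      proof (rule pair_uniq[OF pT comp_in[OF i w(1)] comp_in[OF u j(1)]])
        have "t1 \<cdot> (w \<cdot> i) = (n \<cdot> q1) \<cdot> i" using assoc[OF i w(1) t(1)] w(2) by simp
        also have "... = u" using assoc[OF i q(1) n(1)] qi1 n(2) by simp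
        also have "... = t1 \<cdot> (j \<cdot> u)" using assoc[OF u j(1) t(1)] j(2) id_l[OF u] by simp
        finally show "t1 \<cdot> (w \<cdot> i) = t1 \<cdot> (j \<cdot> u)" .
        show "t2 \<cdot> (w \<cdot> i) = t2 \<cdot> (j \<cdot> u)"
          using assoc[OF i w(1) t(2)] assoc[OF u j(1) t(2)] w(3) j(3) sq by simp
      qed
      have hi: "(h0 \<cdot> w) \<cdot> i = u"
        using assoc[OF i w(1) h0(1)] wi assoc[OF u j(1) h0(1)] h0(2) id_l[OF u] by simp
      have "p \<cdot> (h0 \<cdot> w) = v" using assoc[OF w(1) h0(1) p] h0(3) w(3) by simp
      then show "\<exists>h\<in>hom C P X. h \<cdot> i = u \<and> p \<cdot> h = v" using hin hi by blast
    qed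
  qed
  then show ?thesis unfolding LLP_def using i by (auto simp: hom_def)
qed

lemma cocore_acfib_ret:
  assumes pf: "p \<in> RLP C (sections C)" and pw: "p \<in> weq C"
  shows "p \<in> retractions C"
proof -
  define X where "X = Dom C p"
  define Y where "Y = Cod C p"
  have p: "p \<in> hom C X Y" using pf unfolding RLP_def X_def Y_def hom_def by auto
  obtain s where s: "s \<in> hom C Y X" using weqE[OF pw] X_def Y_def by auto
  have XY: "X \<in> Obj C" "Y \<in> Obj C" using hom_obj[OF p] by auto
  obtain P i1 i2 where cp: "is_coproduct C X Y P i1 i2" using ex_coprod[OF XY] .
  have i: "i1 \<in> hom C X P" "i2 \<in> hom C Y P" using coprod_inj[OF cp] by auto
  obtain q where q: "q \<in> hom C P Y" "q \<cdot> i1 = p" "q \<cdot> i2 = Id C Y"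
    using copair[OF cp p id_in[OF XY(2)]] by blast
  obtain r where r: "r \<in> hom C P X" "r \<cdot> i1 = Id C X" "r \<cdot> i2 = s"
    using copair[OF cp id_in[OF XY(1)] s] by blast
  have "i1 \<in> sections C" using i(1) r unfolding sections_def hom_def by auto
  then have l: "lifts C i1 p" using pf unfolding RLP_def by auto
  have sq: "p \<cdot> Id C X = q \<cdot> i1" using id_r[OF p] q(2) by simp
  obtain h where h: "h \<in> hom C P X" "h \<cdot> i1 = Id C X" "p \<cdot> h = q"
    using lifts_use[OF l i(1) p id_in[OF XY(1)] q(1) sq] by blast
  have "p \<cdot> (h \<cdot> i2) = Id C Y" using assoc[OF i(2) h(1) p] h(3) q(3) by simp
  then show ?thesis using p comp_in[OF i(2) h(1)] unfolding retractions_def hom_def by auto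
qed


lemma retract_data:
  assumes "is_retract_of C f g"
  obtains a r b s where "f \<in> hom C (Dom C f) (Cod C f)" "g \<in> hom C (Dom C g) (Cod C g)"
    "a \<in> hom C (Dom C f) (Dom C g)" "r \<in> hom C (Dom C g) (Dom C f)"
    "b \<in> hom C (Cod C f) (Cod C g)" "s \<in> hom C (Cod C g) (Cod C f)"
    "r \<cdot> a = Id C (Dom C f)" "s \<cdot> b = Id C (Cod C f)"
    "g \<cdot> a = b \<cdot> f" "f \<cdot> r = s \<cdot> g"
  using assms unfolding is_retract_of_def by (auto simp: hom_def)

lemma retract_weq: "is_retract_of C f g \<Longrightarrow> g \<in> weq C \<Longrightarrow> f \<in> weq C"
proof -
  assume R: "is_retract_of C f g" and gw: "g \<in> weq C"
  obtain a r b s where d: "f \<in> hom C (Dom C f) (Cod C f)" "g \<in> hom C (Dom C g) (Cod C g)"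
    "a \<in> hom C (Dom C f) (Dom C g)" "r \<in> hom C (Dom C g) (Dom C f)"
    "b \<in> hom C (Cod C f) (Cod C g)" "s \<in> hom C (Cod C g) (Cod C f)"
    using retract_data[OF R] by metis
  obtain t where t: "t \<in> hom C (Cod C g) (Dom C g)" using weqE[OF gw] .
  show ?thesis using weqI[OF d(1) comp_in[OF comp_in[OF d(5) t] d(4)]] .
qed

lemma retract_LLP:
  assumes R: "is_retract_of C f g" and gS: "g \<in> LLP C S" and S: "S \<subseteq> Arr C"
  shows "f \<in> LLP C S"
proof -
  obtain a r b s where f: "f \<in> hom C (Dom C f) (Cod C f)" and g: "g \<in> hom C (Dom C g) (Cod C g)"
    and a: "a \<in> hom C (Dom C f) (Dom C g)" and r: "r \<in> hom C (Dom C g) (Dom C f)"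
    and b: "b \<in> hom C (Cod C f) (Cod C g)" and s: "s \<in> hom C (Cod C g) (Cod C f)"
    and ra: "r \<cdot> a = Id C (Dom C f)" and sb: "s \<cdot> b = Id C (Cod C f)"
    and ga: "g \<cdot> a = b \<cdot> f" and fr: "f \<cdot> r = s \<cdot> g"
    using retract_data[OF R] by metis
  have "lifts C f p" if pS: "p \<in> S" for p
  proof -
    have p: "p \<in> hom C (Dom C p) (Cod C p)" using pS S arr_hom by auto
    have lg: "lifts C g p" using gS pS unfolding LLP_def by auto
    show ?thesis
    proof (rule liftsI[OF f p])
      fix u v assume u: "u \<in> hom C (Dom C f) (Dom C p)" and v: "v \<in> hom C (Cod C f) (Cod C p)"
        and sq: "p \<cdot> u = v \<cdot> f"
      have ur: "u \<cdot> r \<in> hom C (Dom C g) (Dom C p)" using comp_in[OF r u] .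
      have vs: "v \<cdot> s \<in> hom C (Cod C g) (Cod C p)" using comp_in[OF s v] .
      have "p \<cdot> (u \<cdot> r) = (v \<cdot> f) \<cdot> r" using assoc[OF r u p] sq by simp
      also have "... = v \<cdot> (s \<cdot> g)" using assoc[OF r f v] fr by simp
      also have "... = (v \<cdot> s) \<cdot> g" using assoc[OF g s v] .
      finally have sq': "p \<cdot> (u \<cdot> r) = (v \<cdot> s) \<cdot> g" .
      obtain k where k: "k \<in> hom C (Cod C g) (Dom C p)" "k \<cdot> g = u \<cdot> r" "p \<cdot> k = v \<cdot> s"
        using lifts_use[OF lg g p ur vs sq'] by blast
      have "(k \<cdot> b) \<cdot> f = k \<cdot> (g \<cdot> a)" using assoc[OF f b k(1)] ga by simp
      also have "... = (u \<cdot> r) \<cdot> a" using assoc[OF a g k(1)] k(2) by simp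
      also have "... = u" using assoc[OF a r u] ra id_r[OF u] by simp
      finally have h1: "(k \<cdot> b) \<cdot> f = u" .
      have h2: "p \<cdot> (k \<cdot> b) = v" using assoc[OF b k(1) p] k(3) assoc[OF b s v] sb id_r[OF v] by simp
      show "\<exists>h\<in>hom C (Cod C f) (Dom C p). h \<cdot> f = u \<and> p \<cdot> h = v"
        using comp_in[OF b k(1)] h1 h2 by blast
    qed
  qed
  then show ?thesis unfolding LLP_def using f by (auto simp: hom_def)
qed

lemma retract_RLP:
  assumes R: "is_retract_of C f g" and gS: "g \<in> RLP C S" and S: "S \<subseteq> Arr C"
  shows "f \<in> RLP C S"
proof -
  obtain a r b s where f: "f \<in> hom C (Dom C f) (Cod C f)" and g: "g \<in> hom C (Dom C g) (Cod C g)"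
    and a: "a \<in> hom C (Dom C f) (Dom C g)" and r: "r \<in> hom C (Dom C g) (Dom C f)"
    and b: "b \<in> hom C (Cod C f) (Cod C g)" and s: "s \<in> hom C (Cod C g) (Cod C f)"
    and ra: "r \<cdot> a = Id C (Dom C f)" and sb: "s \<cdot> b = Id C (Cod C f)"
    and ga: "g \<cdot> a = b \<cdot> f" and fr: "f \<cdot> r = s \<cdot> g"
    using retract_data[OF R] by metis
  have "lifts C i f" if iS: "i \<in> S" for i
  proof -
    have i: "i \<in> hom C (Dom C i) (Cod C i)" using iS S arr_hom by auto
    have lg: "lifts C i g" using gS iS unfolding RLP_def by auto
    show ?thesis
    proof (rule liftsI[OF i f])
      fix u v assume u: "u \<in> hom C (Dom C i) (Dom C f)" and v: "v \<in> hom C (Cod C i) (Cod C f)"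
        and sq: "f \<cdot> u = v \<cdot> i"
      have au: "a \<cdot> u \<in> hom C (Dom C i) (Dom C g)" using comp_in[OF u a] .
      have bv: "b \<cdot> v \<in> hom C (Cod C i) (Cod C g)" using comp_in[OF v b] .
      have "g \<cdot> (a \<cdot> u) = (b \<cdot> f) \<cdot> u" using assoc[OF u a g] ga by simp
      also have "... = b \<cdot> (v \<cdot> i)" using assoc[OF u f b] sq by simp
      also have "... = (b \<cdot> v) \<cdot> i" using assoc[OF i v b] .
      finally have sq': "g \<cdot> (a \<cdot> u) = (b \<cdot> v) \<cdot> i" .
      obtain k where k: "k \<in> hom C (Cod C i) (Dom C g)" "k \<cdot> i = a \<cdot> u" "g \<cdot> k = b \<cdot> v"
        using lifts_use[OF lg i g au bv sq'] by blast
      have h1: "(r \<cdot> k) \<cdot> i = u" using assoc[OF i k(1) r] k(2) assoc[OF u a r] ra id_l[OF u] by simp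
      have "f \<cdot> (r \<cdot> k) = (s \<cdot> g) \<cdot> k" using assoc[OF k(1) r f] fr by simp
      also have "... = s \<cdot> (b \<cdot> v)" using assoc[OF k(1) g s] k(3) by simp
      also have "... = v" using assoc[OF v b s] sb id_l[OF v] by simp
      finally have h2: "f \<cdot> (r \<cdot> k) = v" .
      show "\<exists>h\<in>hom C (Cod C i) (Dom C f). h \<cdot> i = u \<and> f \<cdot> h = v"
        using comp_in[OF k(1) r] h1 h2 by blast
    qed
  qed
  then show ?thesis unfolding RLP_def using f by (auto simp: hom_def)
qed

lemma weq_2of3:
  assumes f: "f \<in> Arr C" and g: "g \<in> Arr C" and fg: "Cod C f = Dom C g"
  shows "(f \<in> weq C \<and> g \<in> weq C \<longrightarrow> g \<cdot> f \<in> weq C) \<and>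
         (f \<in> weq C \<and> g \<cdot> f \<in> weq C \<longrightarrow> g \<in> weq C) \<and>
         (g \<in> weq C \<and> g \<cdot> f \<in> weq C \<longrightarrow> f \<in> weq C)"
proof -
  define X where "X = Dom C f"
  define Y where "Y = Cod C f"
  define Z where "Z = Cod C g"
  have f': "f \<in> hom C X Y" using f X_def Y_def by (simp add: hom_def)
  have g': "g \<in> hom C Y Z" using g fg Y_def Z_def by (simp add: hom_def)
  have gf: "g \<cdot> f \<in> hom C X Z" using comp_in[OF f' g'] .
  have dg: "Dom C (g \<cdot> f) = X" "Cod C (g \<cdot> f) = Z" using hom_arr[OF gf] by auto
  have wf: "f \<in> weq C \<longleftrightarrow> hom C Y X \<noteq> {}" using f unfolding weq_def X_def Y_def by auto
  have wg: "g \<in> weq C \<longleftrightarrow> hom C Z Y \<noteq> {}" using g fg unfolding weq_def Y_def Z_def by auto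
  have wgf: "g \<cdot> f \<in> weq C \<longleftrightarrow> hom C Z X \<noteq> {}" using gf dg unfolding weq_def hom_def by auto
  show ?thesis unfolding wf wg wgf using comp_in f' g' by blast
qed


lemma weq_arr: "weq C \<subseteq> Arr C" unfolding weq_def by auto
lemma LLP_arr: "LLP C S \<subseteq> Arr C" unfolding LLP_def by auto
lemma RLP_arr: "RLP C S \<subseteq> Arr C" unfolding RLP_def by auto

lemma core_model: "model_structure C (core_ms C)"
proof -
  define Cof where "Cof = LLP C (retractions C)"
  define Fib where "Fib = RLP C (Cof \<inter> weq C)"
  have fact1: "\<exists>i p. i \<in> Cof \<inter> weq C \<and> p \<in> Fib \<and> Cod C i = Dom C p \<and> p \<cdot> i = f"
    if fA: "f \<in> Arr C" for f
  proof -
    define A where "A = Dom C f"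
    define B where "B = Cod C f"
    have f: "f \<in> hom C A B" using fA A_def B_def by (simp add: hom_def)
    have AB: "A \<in> Obj C" "B \<in> Obj C" using hom_obj[OF f] by auto
    obtain Q \<pi>1 \<pi>2 where pr: "is_product C A B Q \<pi>1 \<pi>2" using ex_prod[OF AB] .
    have \<pi>: "\<pi>1 \<in> hom C Q A" "\<pi>2 \<in> hom C Q B" using prod_proj[OF pr] by auto
    have Q: "Q \<in> Obj C" using hom_obj[OF \<pi>(1)] by auto
    obtain P j1 j2 where cp: "is_coproduct C A Q P j1 j2" using ex_coprod[OF AB(1) Q] .
    have j: "j1 \<in> hom C A P" "j2 \<in> hom C Q P" using coprod_inj[OF cp] by auto
    obtain p where p: "p \<in> hom C P B" "p \<cdot> j1 = f" "p \<cdot> j2 = \<pi>2"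
      using copair[OF cp f \<pi>(2)] by blast
    obtain r where r: "r \<in> hom C P A" using copair[OF cp id_in[OF AB(1)] \<pi>(1)] by blast
    have "j1 \<in> Cof \<inter> weq C" using inj1_cof[OF cp] weqI[OF j(1) r] Cof_def by auto
    moreover have "p \<in> Fib" using core_fib[OF f pr cp p] Fib_def Cof_def by simp
    ultimately show ?thesis using hom_arr[OF j(1)] hom_arr[OF p(1)] p(2) by metis
  qed
  have fact2: "\<exists>i p. i \<in> Cof \<and> p \<in> Fib \<inter> weq C \<and> Cod C i = Dom C p \<and> p \<cdot> i = f"
    if fA: "f \<in> Arr C" for f
  proof -
    define A where "A = Dom C f"
    define B where "B = Cod C f"
    have f: "f \<in> hom C A B" using fA A_def B_def by (simp add: hom_def)
    have AB: "A \<in> Obj C" "B \<in> Obj C" using hom_obj[OF f] by auto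
    obtain P i1 i2 where cp: "is_coproduct C A B P i1 i2" using ex_coprod[OF AB] .
    have i: "i1 \<in> hom C A P" "i2 \<in> hom C B P" using coprod_inj[OF cp] by auto
    obtain q where q: "q \<in> hom C P B" "q \<cdot> i1 = f" "q \<cdot> i2 = Id C B"
      using copair[OF cp f id_in[OF AB(2)]] by blast
    have qr: "q \<in> retractions C" using q i(2) unfolding retractions_def hom_def by auto
    have "retractions C \<subseteq> Fib" unfolding Fib_def
      using RLP_LLP[OF ret_arr] RLP_anti[of "Cof \<inter> weq C" Cof] Cof_def by blast
    then have "q \<in> Fib \<inter> weq C" using qr ret_weq by blast
    moreover have "i1 \<in> Cof" using inj1_cof[OF cp] Cof_def by simp
    ultimately show ?thesis using hom_arr[OF i(1)] hom_arr[OF q(1)] q(2) by metis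
  qed
  have lift1: "\<forall>i \<in> Cof. \<forall>p \<in> Fib \<inter> weq C. lifts C i p"
    using core_acfib_ret Cof_def Fib_def unfolding LLP_def by blast
  have lift2: "\<forall>i \<in> Cof \<inter> weq C. \<forall>p \<in> Fib. lifts C i p"
    unfolding Fib_def RLP_def by blast
  have retr: "\<forall>f g. is_retract_of C f g \<longrightarrow>
        (g \<in> weq C \<longrightarrow> f \<in> weq C) \<and> (g \<in> Cof \<longrightarrow> f \<in> Cof) \<and> (g \<in> Fib \<longrightarrow> f \<in> Fib)"
  proof (intro allI impI conjI)
    fix f g assume R: "is_retract_of C f g"
    show "g \<in> weq C \<Longrightarrow> f \<in> weq C" using retract_weq[OF R] .
    show "g \<in> Cof \<Longrightarrow> f \<in> Cof" using retract_LLP[OF R _ ret_arr] Cof_def by simp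
    show "g \<in> Fib \<Longrightarrow> f \<in> Fib" using retract_RLP[OF R, of "Cof \<inter> weq C"] Fib_def weq_arr by blast
  qed
  show ?thesis
    unfolding core_ms_def Let_def model_structure_def Cof_def[symmetric] Fib_def[symmetric]
    apply (simp only: prod.case)
    using weq_arr LLP_arr[of "retractions C"] RLP_arr[of "Cof \<inter> weq C"] Cof_def Fib_def
      weq_2of3 retr lift1 lift2 fact1 fact2
    by blast
qed

lemma cocore_model: "model_structure C (cocore_ms C)"
proof -
  define Fib where "Fib = RLP C (sections C)"
  define Cof where "Cof = LLP C (Fib \<inter> weq C)"
  have fact1: "\<exists>i p. i \<in> Cof \<inter> weq C \<and> p \<in> Fib \<and> Cod C i = Dom C p \<and> p \<cdot> i = f"
    if fA: "f \<in> Arr C" for f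
  proof -
    define A where "A = Dom C f"
    define B where "B = Cod C f"
    have f: "f \<in> hom C A B" using fA A_def B_def by (simp add: hom_def)
    have AB: "A \<in> Obj C" "B \<in> Obj C" using hom_obj[OF f] by auto
    obtain Q \<pi>1 \<pi>2 where pr: "is_product C A B Q \<pi>1 \<pi>2" using ex_prod[OF AB] .
    have \<pi>: "\<pi>1 \<in> hom C Q A" "\<pi>2 \<in> hom C Q B" using prod_proj[OF pr] by auto
    obtain i where i: "i \<in> hom C A Q" "\<pi>1 \<cdot> i = Id C A" "\<pi>2 \<cdot> i = f"
      using pair[OF pr id_in[OF AB(1)] f] by blast
    have isec: "i \<in> sections C" using i \<pi>(1) unfolding sections_def hom_def by auto
    have "sections C \<subseteq> Cof" unfolding Cof_def
      using LLP_RLP[OF sec_arr] LLP_anti[of "Fib \<inter> weq C" Fib] Fib_def by blast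
    then have "i \<in> Cof \<inter> weq C" using isec sec_weq by blast
    moreover have "\<pi>2 \<in> Fib" using proj2_fib[OF pr] Fib_def by simp
    ultimately show ?thesis using hom_arr[OF i(1)] hom_arr[OF \<pi>(2)] i(3) by metis
  qed
  have fact2: "\<exists>i p. i \<in> Cof \<and> p \<in> Fib \<inter> weq C \<and> Cod C i = Dom C p \<and> p \<cdot> i = f"
    if fA: "f \<in> Arr C" for f
  proof -
    define A where "A = Dom C f"
    define B where "B = Cod C f"
    have f: "f \<in> hom C A B" using fA A_def B_def by (simp add: hom_def)
    have AB: "A \<in> Obj C" "B \<in> Obj C" using hom_obj[OF f] by auto
    obtain S c1 c2 where cp: "is_coproduct C A B S c1 c2" using ex_coprod[OF AB] .
    have c: "c1 \<in> hom C A S" "c2 \<in> hom C B S" using coprod_inj[OF cp] by auto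
    have S: "S \<in> Obj C" using hom_obj[OF c(1)] by auto
    obtain P q1 q2 where pr: "is_product C S B P q1 q2" using ex_prod[OF S AB(2)] .
    have q: "q1 \<in> hom C P S" "q2 \<in> hom C P B" using prod_proj[OF pr] by auto
    obtain i where i: "i \<in> hom C A P" "q1 \<cdot> i = c1" "q2 \<cdot> i = f"
      using pair[OF pr c(1) f] by blast
    obtain e where e: "e \<in> hom C B P" using pair[OF pr c(2) id_in[OF AB(2)]] by blast
    have "q2 \<in> Fib \<inter> weq C" using proj2_fib[OF pr] weqI[OF q(2) e] Fib_def by auto
    moreover have "i \<in> Cof" using cocore_cof[OF f cp pr i] Cof_def Fib_def by simp
    ultimately show ?thesis using hom_arr[OF i(1)] hom_arr[OF q(2)] i(3) by metis
  qed
  have lift1: "\<forall>i \<in> Cof. \<forall>p \<in> Fib \<inter> weq C. lifts C i p"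
    unfolding Cof_def LLP_def by blast
  have lift2: "\<forall>i \<in> Cof \<inter> weq C. \<forall>p \<in> Fib. lifts C i p"
    using cocore_acof_sec Cof_def Fib_def unfolding RLP_def by blast
  have retr: "\<forall>f g. is_retract_of C f g \<longrightarrow>
        (g \<in> weq C \<longrightarrow> f \<in> weq C) \<and> (g \<in> Cof \<longrightarrow> f \<in> Cof) \<and> (g \<in> Fib \<longrightarrow> f \<in> Fib)"
  proof (intro allI impI conjI)
    fix f g assume R: "is_retract_of C f g"
    show "g \<in> weq C \<Longrightarrow> f \<in> weq C" using retract_weq[OF R] .
    show "g \<in> Cof \<Longrightarrow> f \<in> Cof" using retract_LLP[OF R, of "Fib \<inter> weq C"] Cof_def weq_arr by blast
    show "g \<in> Fib \<Longrightarrow> f \<in> Fib" using retract_RLP[OF R _ sec_arr] Fib_def by simp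
  qed
  show ?thesis
    unfolding cocore_ms_def Let_def model_structure_def Fib_def[symmetric] Cof_def[symmetric]
    apply (simp only: prod.case)
    using weq_arr LLP_arr[of "Fib \<inter> weq C"] RLP_arr[of "sections C"] Cof_def Fib_def
      weq_2of3 retr lift1 lift2 fact1 fact2
    by blast
qed

lemma quillen: "id_left_quillen_equivalence C (core_ms C) (cocore_ms C)"
proof -
  have sub: "RLP C (sections C) \<inter> weq C \<subseteq> retractions C" using cocore_acfib_ret by blast
  have "LLP C (retractions C) \<subseteq> LLP C (RLP C (sections C) \<inter> weq C)" using LLP_anti[OF sub] .
  then show ?thesis
    unfolding id_left_quillen_equivalence_def ms_cof_def ms_we_def core_ms_def cocore_ms_def Let_def
    using core_model cocore_model unfolding core_ms_def cocore_ms_def Let_def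
    by auto
qed

end

theorem proposition5:
  fixes C :: "('o, 'a) cat"
  assumes "category C"
    and "bicomplete C"
    and "splitting_coproducts C"
    and "disjoint_coproducts C"
  shows "id_left_quillen_equivalence C (core_ms C) (cocore_ms C)"
proof -
  interpret cc C using assms(1,2) by (unfold_locales)
  show ?thesis by (rule quillen)
qed

end
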